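(* Let $\ell\ge1$ and $V=\prod_{j=\ell,\dots,2,1}(c_1x^jy^jc_2)^2$. If $C$ is an accepting computation of $V$, then $C$ never matches a symbol $x$ with another symbol from the same $x$-block, and never matches a symbol $y$ with another symbol from the same $y$-block.
   Context: Queue automaton: a configuration is written $Q\,\|\,x$ ($Q$ = queue contents, $x$ = remaining input); a step from $Q\,\|\,\sigma x$ ($\sigma$ a symbol) goes either to $Q\sigma\,\|\,x$ (push the input symbol) or, if $Q=\sigma Q'$, to $Q'\,\|\,x$ (the input symbol is matched against the leftmost queue symbol, which is popped; that queue symbol was pushed from an earlier input position and the two occurrences are said to be matched). An accepting computation of $w$ is a computation $\varepsilon\,\|\,w\vdash^*\varepsilon\,\|\,\varepsilon$ ($\varepsilon$ the empty string). Here $c_1,c_2,x,y$ are four distinct symbols. In $V=(c_1x^\ell y^\ell c_2)(c_1x^\ell y^\ell c_2)\cdots(c_1x^1y^1c_2)(c_1x^1y^1c_2)$, each displayed maximal subword $x^j$ is called an $x$-block and each displayed subword $y^j$ a $y$-block. *)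

theory Defs
  imports Main
begin

text \<open>A configuration (Q, i) stands for the configuration
  map (nth w) Q || drop i w
of the paper: Q lists the input positions from which the queue symbols were
pushed (leftmost = front of the queue) and i is the number of input symbols
already read.\<close>

type_synonym qconf = "nat list \<times> nat"

inductive qstep :: "'a list \<Rightarrow> qconf \<Rightarrow> qconf \<Rightarrow> bool" for w where
  push: "i < length w \<Longrightarrow> qstep w (Q, i) (Q @ [i], Suc i)"
| pop:  "i < length w \<Longrightarrow> w ! p = w ! i \<Longrightarrow> qstep w (p # Q, i) (Q, Suc i)"

definition accepting_computation :: "'a list \<Rightarrow> qconf list \<Rightarrow> bool" where
  "accepting_computation w cs \<longleftrightarrow>
     cs \<noteq> [] \<and> hd cs = ([], 0) \<and> last cs = ([], length w) \<and>
     (\<forall>k. Suc k < length cs \<longrightarrow> qstep w (cs ! k) (cs ! Suc k))"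

definition matches :: "qconf list \<Rightarrow> nat \<Rightarrow> nat \<Rightarrow> bool" where
  "matches cs p i \<longleftrightarrow>
     (\<exists>k Q. Suc k < length cs \<and> cs ! k = (p # Q, i) \<and> cs ! Suc k = (Q, Suc i))"

definition same_block :: "'a list \<Rightarrow> 'a \<Rightarrow> nat \<Rightarrow> nat \<Rightarrow> bool" where
  "same_block w a p q \<longleftrightarrow> p < length w \<and> q < length w \<and>
     (\<forall>k. min p q \<le> k \<and> k \<le> max p q \<longrightarrow> w ! k = a)"

definition Vword :: "'a \<Rightarrow> 'a \<Rightarrow> 'a \<Rightarrow> 'a \<Rightarrow> nat \<Rightarrow> 'a list" where
  "Vword c1 c2 x y l =
     concat (map (\<lambda>j. let b = [c1] @ replicate j x @ replicate j y @ [c2] in b @ b)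
                 (rev [1..<Suc l]))"

end

theory Submission
  imports Defs
begin

definition qinv :: "'a list \<Rightarrow> qconf \<Rightarrow> bool" where
 "qinv w c = (sorted (fst c) \<and> (\<forall>q\<in>set (fst c). q < snd c) \<and>
     (\<forall>a. even (count_list (take (snd c) w) a + count_list (map (nth w) (fst c)) a)))"

lemma qinv_step: "qstep w c c' \<Longrightarrow> qinv w c \<Longrightarrow> qinv w c'"
proof (induction rule: qstep.induct)
  case (push i Q)
  then show ?case
    by (auto simp: qinv_def sorted_append take_Suc_conv_app_nth less_Suc_eq)
next
  case (pop i p Q)
  then show ?case
    by (auto simp: qinv_def take_Suc_conv_app_nth less_Suc_eq)
qed

lemma qinv_all:
  assumes "accepting_computation w cs" "k < length cs"
  shows "qinv w (cs ! k)"
  using assms(2)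
proof (induction k)
  case 0
  then show ?case using assms(1)
    by (auto simp: accepting_computation_def qinv_def hd_conv_nth)
next
  case (Suc k)
  then have "qinv w (cs ! k)" by simp
  moreover have "qstep w (cs ! k) (cs ! Suc k)"
    using assms(1) Suc.prems by (auto simp: accepting_computation_def)
  ultimately show ?case using qinv_step by blast
qed

definition goodw :: "'a \<Rightarrow> 'a \<Rightarrow> 'a list \<Rightarrow> bool" where
 "goodw c1 c2 w = (count_list w c1 = count_list w c2 \<and>
    (\<forall>i<length w. w ! i \<noteq> c1 \<and> w ! i \<noteq> c2 \<longrightarrow>
        count_list (take i w) c1 = count_list (take i w) c2 + 1))"

lemma goodw_append: "goodw c1 c2 u \<Longrightarrow> goodw c1 c2 v \<Longrightarrow> goodw c1 c2 (u @ v)"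
  unfolding goodw_def
proof (intro conjI allI impI)
  fix i assume A: "count_list u c1 = count_list u c2 \<and>
    (\<forall>i<length u. u ! i \<noteq> c1 \<and> u ! i \<noteq> c2 \<longrightarrow>
        count_list (take i u) c1 = count_list (take i u) c2 + 1)"
    and B: "count_list v c1 = count_list v c2 \<and>
    (\<forall>i<length v. v ! i \<noteq> c1 \<and> v ! i \<noteq> c2 \<longrightarrow>
        count_list (take i v) c1 = count_list (take i v) c2 + 1)"
    and i: "i < length (u @ v)" "(u @ v) ! i \<noteq> c1 \<and> (u @ v) ! i \<noteq> c2"
  show "count_list (take i (u @ v)) c1 = count_list (take i (u @ v)) c2 + 1"
  proof (cases "i < length u")
    case True
    then show ?thesis using A i by (auto simp: nth_append)
  next
    case False
    then show ?thesis using A B i by (auto simp: nth_append)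
  qed
qed (auto)

lemma goodw_block:
  assumes "c1 \<noteq> c2" "c1 \<notin> set m" "c2 \<notin> set m"
  shows "goodw c1 c2 ([c1] @ m @ [c2])"
  unfolding goodw_def
proof (intro conjI allI impI)
  show "count_list ([c1] @ m @ [c2]) c1 = count_list ([c1] @ m @ [c2]) c2"
    using assms by simp
next
  fix i assume i: "i < length ([c1] @ m @ [c2])"
    "([c1] @ m @ [c2]) ! i \<noteq> c1 \<and> ([c1] @ m @ [c2]) ! i \<noteq> c2"
  then obtain j where j: "i = Suc j" "j < length m"
    by (cases i) (auto simp: nth_append split: if_splits)
  have "take i ([c1] @ m @ [c2]) = c1 # take j m" using j by simp
  moreover have "c1 \<notin> set (take j m)" "c2 \<notin> set (take j m)"
    using assms in_set_takeD by fastforce+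
  ultimately show "count_list (take i ([c1] @ m @ [c2])) c1 =
      count_list (take i ([c1] @ m @ [c2])) c2 + 1" using assms by simp
qed

lemma goodw_concat: "(\<forall>b\<in>set bs. goodw c1 c2 b) \<Longrightarrow> goodw c1 c2 (concat bs)"
proof (induction bs)
  case Nil
  then show ?case by (simp add: goodw_def)
next
  case (Cons b bs)
  then show ?case using goodw_append[of c1 c2 b "concat bs"] by simp
qed

lemma goodw_V:
  assumes "distinct [c1, c2, x, y]"
  shows "goodw c1 c2 (Vword c1 c2 x y l)"
  unfolding Vword_def
proof (rule goodw_concat, clarsimp simp: Let_def)
  fix j
  have B: "goodw c1 c2 ([c1] @ (replicate j x @ replicate j y) @ [c2])"
    using assms by (intro goodw_block) auto
  then show "goodw c1 c2 (c1 # replicate j x @ replicate j y @ c2 # c1 # replicate j x @ replicate j y @ [c2])"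
    using goodw_append[OF B B] by simp
qed

theorem lemma10:
  fixes c1 c2 x y :: 'a and l :: nat and cs :: "qconf list"
  assumes "distinct [c1, c2, x, y]"
    and "l \<ge> 1"
    and "accepting_computation (Vword c1 c2 x y l) cs"
  shows "\<forall>p i. matches cs p i \<longrightarrow>
           \<not> same_block (Vword c1 c2 x y l) x p i \<and>
           \<not> same_block (Vword c1 c2 x y l) y p i"
proof (intro allI impI)
  fix p i
  let ?w = "Vword c1 c2 x y l"
  assume "matches cs p i"
  then obtain k Q where k: "Suc k < length cs" "cs ! k = (p # Q, i)"
    unfolding matches_def by blast
  have I: "qinv ?w (p # Q, i)" using qinv_all[OF assms(3), of k] k by simp
  have G: "goodw c1 c2 ?w" using goodw_V[OF assms(1)] .
  have key: False if sb: "same_block ?w z p i" and z: "z \<noteq> c1" "z \<noteq> c2" for z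
  proof -
    have pi: "p < i" using I by (simp add: qinv_def)
    have all: "\<forall>q\<in>set (p # Q). ?w ! q = z"
    proof
      fix q assume q: "q \<in> set (p # Q)"
      have "p \<le> q" using I q by (auto simp: qinv_def)
      moreover have "q < i" using I q by (auto simp: qinv_def)
      ultimately show "?w ! q = z" using sb pi unfolding same_block_def by auto
    qed
    have "\<forall>a \<in> {c1, c2}. a \<notin> set (map (nth ?w) (p # Q))" using all z by auto
    then have cq: "count_list (map (nth ?w) (p # Q)) c1 = 0"
                  "count_list (map (nth ?w) (p # Q)) c2 = 0"
      by (simp_all only: count_list_0_iff) auto
    have e1: "even (count_list (take i ?w) c1)" "even (count_list (take i ?w) c2)"
      using I cq unfolding qinv_def by (metis add_0_right fst_conv snd_conv)+
    have "i < length ?w" "?w ! i = z" using sb unfolding same_block_def by auto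
    then have "count_list (take i ?w) c1 = count_list (take i ?w) c2 + 1"
      using G z unfolding goodw_def by auto
    then show False using e1 by simp
  qed
  show "\<not> same_block ?w x p i \<and> \<not> same_block ?w y p i"
    using key[of x] key[of y] assms(1) by auto
qed

end
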